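(* Let $n\ge1$ and $\lambda\in\mathcal O(n)$, and let $\mu=\mathrm{Syl}(\lambda)\in\mathcal D(n)$ be the image of $\lambda$ under Sylvester's bijection. Then $\lambda^2\in\mathcal O(2n)$ and $\Phi(\lambda^2)=2\mu:=(2\mu_1,2\mu_2,\dots,2\mu_{\ell(\mu)})$.
   Context: A partition $\lambda$ of $n$ is a non-increasing sequence $\lambda=(\lambda_1,\dots,\lambda_\ell)$ of positive integers with sum $n$; $\ell(\lambda)=\ell$ is its length, and by convention $\lambda_j=0$ for $j>\ell$. $\mathcal O(n)$ is the set of partitions of $n$ all of whose parts are odd; $\mathcal D(n)$ is the set of partitions of $n$ with distinct parts. $m_i(\lambda)$ is the multiplicity of $i$ as a part of $\lambda$. The conjugate $\lambda'$ is given by $\lambda'_i=\#\{j:\lambda_j\ge i\}$. For partitions $\alpha,\beta$, $\alpha\circ\beta$ is the partition whose parts are all parts of $\alpha$ and of $\beta$ in non-increasing order, and $\alpha^2=\alpha\circ\alpha=(\alpha_1,\alpha_1,\alpha_2,\alpha_2,\dots)$. Sylvester's bijection $\mathrm{Syl}:\mathcal O(n)\to\mathcal D(n)$: for $\lambda\in\mathcal O(n)$ let $d=\max\{j:\lambda_j\ge 2j-1\}$; set $\epsilon=0$ if $\lambda_d>2d-1$ and $\epsilon=1$ if $\lambda_d=2d-1$. Then $\mathrm{Syl}(\lambda)=\mu$ has $2d-\epsilon$ parts given by $\mu_{2j-1}=\frac{\lambda_j+1}{2}+\lambda'_{2j-1}-2j+1$ for $j=1,\dots,d$, and $\mu_{2j}=\frac{\lambda_j-1}{2}+\lambda'_{2j+1}-2j+1$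 for $j=1,\dots,d-\epsilon$. Bressoud's map $B$: for $\beta\in\mathcal O(n)\cap\mathcal D(n)$, decompose the parts of $\beta$ into runs (maximal sequences of consecutive odd integers all occurring as parts of $\beta$). For a run $2m-1>\dots>2m-2k+1$ form pairs $(2m-1,2m-3),(2m-5,2m-7),\dots$ from the largest term; if $k$ is odd the remaining smallest term $c$ becomes the pair $(\frac{c+1}{2},\frac{c-1}{2})$. Concatenate all pairs (runs in decreasing order) into $\pi=(\pi_1,\dots,\pi_{2s})$ with pairs $(\pi_{2j-1},\pi_{2j})$. A pair interchange replaces adjacent pairs $(a+1,a),(2b+1,2b-1)$ in positions $2j-1,\dots,2j+2$ with $a\le 2b+1$ by $(2b+3,2b+1,a-1,a-2)$. Apply pair interchanges (leftmost first) until none is possible and delete zero entries to get $B(\beta)$; $B$ of the empty partition is empty. Insertion: for a partition $\gamma$ (with $\gamma_k=0$ for $k>\ell(\gamma)$) and an integer $a\ge1$, define $I_a(\gamma)$: for $j=0,1,2,\dots$ in turn, if $j=a-1$ set $I_a(\gamma)=(\gamma_1+2,\dots,\gamma_{2j}+2,\gamma_{2j+1}+2,\gamma_{2j+2},\dots)$ and stop; otherwise, if $2a-2j-2>\gamma_{2j+1}$ set $I_a(\gamma)=(\gamma_1+2,\dots,\gamma_{2j}+2,2a-2j,2a-2j-2,\gamma_{2j+1},\gamma_{2j+2},\dots)$ and stop; otherwise pass to $j+1$. Zero entries are discarded. The map $\Phi:\mathcal O(n)\to\mathcal D(n)$: for $\lambda\in\mathcal O(n)$ write uniquely $\lambda=\alpha^2\circ\beta$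 with $\beta$ having distinct parts. Let $t=\ell(\alpha)$, $\alpha_i=2a_i-1$. Set $\gamma^{(0)}=B(\beta)$, $\gamma^{(i)}=I_{a_i}(\gamma^{(i-1)})$ for $i=1,\dots,t$, and $\Phi(\lambda)=\gamma^{(t)}$. *)

theory Defs
  imports Main "HOL-Library.While_Combinator"
begin

definition partitions :: "nat \<Rightarrow> nat list set" where
  "partitions n = {xs. sorted_wrt (\<ge>) xs \<and> (\<forall>x\<in>set xs. 0 < x) \<and> sum_list xs = n}"

definition OddParts :: "nat \<Rightarrow> nat list set" where
  "OddParts n = {xs \<in> partitions n. \<forall>x\<in>set xs. odd x}"

definition DistParts :: "nat \<Rightarrow> nat list set" where
  "DistParts n = {xs \<in> partitions n. distinct xs}"

text \<open>1-indexed part with the convention lam_j = 0 for j > length.\<close>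
definition part :: "nat list \<Rightarrow> nat \<Rightarrow> nat" where
  "part xs j = (if 1 \<le> j \<and> j \<le> length xs then xs ! (j - 1) else 0)"

definition conj_part :: "nat list \<Rightarrow> nat \<Rightarrow> nat" where
  "conj_part xs i = length (filter (\<lambda>x. i \<le> x) xs)"

definition psquare :: "nat list \<Rightarrow> nat list" where
  "psquare xs = concat (map (\<lambda>x. [x, x]) xs)"

definition syl_d :: "nat list \<Rightarrow> nat" where
  "syl_d lam = Max ({0} \<union> {j. 1 \<le> j \<and> j \<le> length lam \<and> 2 * j - 1 \<le> part lam j})"

definition Syl :: "nat list \<Rightarrow> nat list" where
  "Syl lam = (let d = syl_d lam;
      eps = (if part lam d = 2 * d - 1 then 1 else 0 :: nat);
      odd_entry = (\<lambda>j::nat. nat ((int (part lam j) + 1) div 2 + int (conj_part lam (2 * j - 1)) - 2 * int j + 1));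
      even_entry = (\<lambda>j::nat. nat ((int (part lam j) - 1) div 2 + int (conj_part lam (2 * j + 1)) - 2 * int j + 1))
    in concat (map (\<lambda>j. [odd_entry j] @ (if j \<le> d - eps then [even_entry j] else [])) [1..<d + 1]))"

text \<open>Decomposition of a decreasing list of distinct odd numbers into maximal runs
  of consecutive odd integers.\<close>
fun runs :: "nat list \<Rightarrow> nat list list" where
  "runs [] = []"
| "runs (x # xs) = (case runs xs of
      [] \<Rightarrow> [[x]]
    | r # rs \<Rightarrow> (if hd r + 2 = x then (x # r) # rs else [x] # r # rs))"

text \<open>Pairs formed from a run (flattened): (2m-1,2m-3),(2m-5,2m-7),...; a leftover
  smallest term c becomes ((c+1)/2,(c-1)/2).\<close>
fun pair_run :: "nat list \<Rightarrow> int list" where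
  "pair_run (a # b # rest) = int a # int b # pair_run rest"
| "pair_run [c] = [(int c + 1) div 2, (int c - 1) div 2]"
| "pair_run [] = []"

definition bress_pairs :: "nat list \<Rightarrow> int list" where
  "bress_pairs beta = concat (map pair_run (runs beta))"

text \<open>Leftmost pair interchange: (a+1,a),(2b+1,2b-1) with a \<le> 2b+1 becomes
  (2b+3,2b+1,a-1,a-2); pairs occupy positions (2j-1,2j).\<close>
fun interchange_step :: "int list \<Rightarrow> int list option" where
  "interchange_step (x1 # x2 # x3 # x4 # rest) =
     (if x1 = x2 + 1 \<and> odd x3 \<and> x4 = x3 - 2 \<and> x2 \<le> x3
      then Some ((x3 + 2) # x3 # (x2 - 1) # (x2 - 2) # rest)
      else map_option (\<lambda>r. x1 # x2 # r) (interchange_step (x3 # x4 # rest)))"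
| "interchange_step _ = None"

definition Bress :: "nat list \<Rightarrow> nat list" where
  "Bress beta = map nat (filter (\<lambda>x. x \<noteq> 0)
     (while (\<lambda>p. interchange_step p \<noteq> None) (\<lambda>p. the (interchange_step p)) (bress_pairs beta)))"

function ins_aux :: "nat \<Rightarrow> nat \<Rightarrow> nat list \<Rightarrow> nat list" where
  "ins_aux a j g =
     (if a \<le> j + 1 then map (\<lambda>x. x + 2) (take (2 * j + 1) g) @ drop (2 * j + 1) g
      else if 2 * a - 2 * j - 2 > g ! (2 * j)
      then map (\<lambda>x. x + 2) (take (2 * j) g) @ [2 * a - 2 * j, 2 * a - 2 * j - 2] @ drop (2 * j) g
      else ins_aux a (j + 1) g)"
  by pat_completeness auto
termination by (relation "measure (\<lambda>(a, j, g). a - j)") auto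

definition Ins :: "nat \<Rightarrow> nat list \<Rightarrow> nat list" where
  "Ins a gam = filter (\<lambda>x. x \<noteq> 0) (ins_aux a 0 (gam @ replicate (2 * a + 2) 0))"

text \<open>lam = alpha^2 o beta with beta having distinct parts: each part value i of
  multiplicity m contributes m div 2 copies of i to alpha and (m mod 2) copies to beta.\<close>
definition phi_alpha :: "nat list \<Rightarrow> nat list" where
  "phi_alpha lam = rev (sort (concat (map (\<lambda>i. replicate (count_list lam i div 2) i) (remdups lam))))"

definition phi_beta :: "nat list \<Rightarrow> nat list" where
  "phi_beta lam = rev (sort (filter (\<lambda>i. odd (count_list lam i)) (remdups lam)))"

definition Phi :: "nat list \<Rightarrow> nat list" where
  "Phi lam = foldl (\<lambda>gam x. Ins ((x + 1) div 2) gam) (Bress (phi_beta lam)) (phi_alpha lam)"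

end

theory Submission
  imports Defs "HOL-Library.Multiset"
begin

definition Xv :: "nat list \<Rightarrow> nat \<Rightarrow> int" where
  "Xv lam i = (if odd i then
      (int (Defs.part lam ((i+1) div 2)) + 1) div 2 + int (conj_part lam (2 * ((i+1) div 2) - 1)) - 2 * int ((i+1) div 2) + 1
    else (int (Defs.part lam (i div 2)) - 1) div 2 + int (conj_part lam (2 * (i div 2) + 1)) - 2 * int (i div 2) + 1)"

definition sylL :: "nat list \<Rightarrow> nat" where
  "sylL lam = 2 * syl_d lam - (if Defs.part lam (syl_d lam) = 2 * syl_d lam - 1 then 1 else 0)"

lemma concat_pairs_all:
  "concat (map (\<lambda>j. [f j, g j]) [1..<d+1]) =
   map (\<lambda>i. if odd i then f ((i+1) div 2) else g (i div 2)) [1..<2*d+1]"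
proof (induction d)
  case 0 then show ?case by simp
next
  case (Suc d)
  have e: "2 * Suc d + 1 = Suc (Suc (2*d+1))" by simp
  have "[1..<2 * Suc d + 1] = [1..<2*d+1] @ [2*d+1, 2*d+2]"
    unfolding e upt_Suc_append[of 1 "Suc (2*d+1)", simplified] upt_Suc_append[of 1 "2*d+1", simplified]
    by simp
  moreover have "[1..<Suc d + 1] = [1..<d+1] @ [d+1]" by simp
  moreover have "(if odd (2*d+1) then f ((2*d+1+1) div 2) else g ((2*d+1) div 2)) = f (d+1)" by simp
  moreover have "(if odd (2*d+2) then f ((2*d+2+1) div 2) else g ((2*d+2) div 2)) = g (d+1)" by simp
  ultimately show ?case using Suc.IH
    by (simp only: concat_append map_append list.map concat.simps append_Nil2 append.simps)
qed

lemma concat_pairs: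
  assumes "m = d \<or> m + 1 = d"
  shows "concat (map (\<lambda>j. [f j] @ (if j \<le> m then [g j] else [])) [1..<d+1]) =
   map (\<lambda>i. if odd i then f ((i+1) div 2) else g (i div 2)) [1..<2*d - (if m < d then 1 else 0) + 1]"
  using assms
proof
  assume "m = d"
  then have "map (\<lambda>j. [f j] @ (if j \<le> m then [g j] else [])) [1..<d+1] = map (\<lambda>j. [f j, g j]) [1..<d+1]"
    by simp
  then have "concat (map (\<lambda>j. [f j] @ (if j \<le> m then [g j] else [])) [1..<d+1]) =
     map (\<lambda>i. if odd i then f ((i+1) div 2) else g (i div 2)) [1..<2*d+1]"
    using concat_pairs_all[of f g d] by (simp only:)
  then show ?thesis using \<open>m = d\<close> by (simp only: less_irrefl if_False diff_zero)
next
  assume md: "m + 1 = d"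
  have "map (\<lambda>j. [f j] @ (if j \<le> m then [g j] else [])) [1..<d+1] =
     map (\<lambda>j. [f j, g j]) [1..<m+1] @ [[f d]]"
    using md by simp
  moreover have "[1..<2*d - 1 + 1] = [1..<2*m+1] @ [2*m+1]"
  proof -
    have "2*d - 1 + 1 = Suc (2*m+1)" using md by simp
    then show ?thesis by (simp only: upt_Suc_append[of 1 "2*m+1"])
  qed
  moreover have "f d = (\<lambda>i. if odd i then f ((i+1) div 2) else g (i div 2)) (2*m+1)"
    using md by simp
  moreover have "(if m < d then 1 else 0) = (1::nat)" using md by simp
  ultimately show ?thesis using concat_pairs_all[of f g m]
    by (simp only: concat_append map_append list.map concat.simps append_Nil2)
qed

lemma Syl_alt: "Syl lam = map (\<lambda>i. nat (Xv lam i)) [1..<sylL lam + 1]"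
proof -
  define d where "d = syl_d lam"
  define eps where "eps = (if Defs.part lam d = 2 * d - 1 then 1 else 0 :: nat)"
  have m: "d - eps = d \<or> d - eps + 1 = d" unfolding eps_def by auto
  have L: "sylL lam = 2*d - (if d - eps < d then 1 else 0)"
    unfolding sylL_def d_def[symmetric] eps_def by (cases d) auto
  show ?thesis
    unfolding Syl_def Let_def d_def[symmetric] eps_def[symmetric]
    unfolding concat_pairs[OF m] L
    by (intro map_cong refl) (simp add: Xv_def)
qed


declare ins_aux.simps[simp del]

lemma part_app: "Defs.part (xs @ [c]) j = (if j \<le> length xs then Defs.part xs j else if j = length xs + 1 then c else 0)"
  by (auto simp: Defs.part_def nth_append)

lemma conj_app: "conj_part (xs @ [c]) i = conj_part xs i + (if i \<le> c then 1 else 0)"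
  by (simp add: conj_part_def)

lemma conj_all: "\<forall>x\<in>set xs. c \<le> x \<Longrightarrow> i \<le> c \<Longrightarrow> conj_part xs i = length xs"
  unfolding conj_part_def by (subst filter_True) auto

lemma part_ge: "\<forall>x\<in>set xs. c \<le> x \<Longrightarrow> 1 \<le> j \<Longrightarrow> j \<le> length xs \<Longrightarrow> c \<le> Defs.part xs j"
  unfolding Defs.part_def by auto

lemma Xv_app:
  assumes "odd c" "1 \<le> i" "i \<le> 2 * length xs"
  shows "Xv (xs @ [c]) i = Xv xs i + (if i \<le> c then 1 else 0)"
proof (cases "odd i")
  case True
  have j: "(i+1) div 2 \<le> length xs" "2 * ((i+1) div 2) - 1 = i" using assms True by (auto elim!: oddE)
  show ?thesis using True j unfolding Xv_def part_app conj_app by simp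
next
  case False
  have j: "i div 2 \<le> length xs" "2 * (i div 2) + 1 = i + 1" using assms False by auto
  have "(i + 1 \<le> c) = (i \<le> c)" using assms(1) False by presburger
  then show ?thesis using False j unfolding Xv_def part_app conj_app by simp
qed

lemma syl_d_fin: "finite ({0} \<union> {j. 1 \<le> j \<and> j \<le> length lam \<and> 2 * j - 1 \<le> Defs.part lam j})"
  by (rule finite_subset[of _ "{0..length lam}"]) auto

lemma syl_d_le: "syl_d lam \<le> length lam"
  unfolding syl_d_def using syl_d_fin[of lam] by (subst Max_le_iff) auto

lemma syl_d_ge: "1 \<le> j \<Longrightarrow> j \<le> length lam \<Longrightarrow> 2 * j - 1 \<le> Defs.part lam j \<Longrightarrow> j \<le> syl_d lam"
  unfolding syl_d_def using syl_d_fin[of lam] by (intro Max_ge) auto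

lemma syl_d_in: "syl_d lam = 0 \<or> (1 \<le> syl_d lam \<and> syl_d lam \<le> length lam \<and> 2 * syl_d lam - 1 \<le> Defs.part lam (syl_d lam))"
proof -
  have "syl_d lam \<in> {0} \<union> {j. 1 \<le> j \<and> j \<le> length lam \<and> 2 * j - 1 \<le> Defs.part lam j}"
    unfolding syl_d_def using syl_d_fin[of lam] by (intro Max_in) auto
  then show ?thesis by auto
qed

lemma Xv_lower:
  assumes "\<forall>x\<in>set xs. c \<le> x" "j + 1 \<le> length xs" "2 * j + 1 \<le> c"
  shows "Xv xs (2*j+1) \<ge> int ((c+1) div 2) + int (length xs) - 2 * int j - 1"
proof -
  have p: "c \<le> Defs.part xs (j+1)" using part_ge[OF assms(1)] assms(2) by simp
  have cj: "conj_part xs (2 * (j+1) - 1) = length xs" using conj_all[OF assms(1)] assms(3) by simp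
  have "(int c + 1) div 2 \<le> (int (Defs.part xs (j+1)) + 1) div 2" using p by (intro zdiv_mono1) auto
  moreover have "int ((c+1) div 2) = (int c + 1) div 2" by simp
  ultimately show ?thesis unfolding Xv_def using cj by simp
qed

lemma ins_aux_stop: "a \<le> j+1 \<Longrightarrow> ins_aux a j g = map (\<lambda>x. x+2) (take (2*j+1) g) @ drop (2*j+1) g"
  by (subst ins_aux.simps) simp

lemma ins_aux_ins: "\<not> a \<le> j+1 \<Longrightarrow> 2*a-2*j-2 > g!(2*j) \<Longrightarrow>
   ins_aux a j g = map (\<lambda>x. x+2) (take (2*j) g) @ [2 * a - 2 * j, 2 * a - 2 * j - 2] @ drop (2*j) g"
  by (subst ins_aux.simps) simp

lemma ins_aux_skip:
  assumes "J < a" "j0 \<le> J" "\<forall>j. j0 \<le> j \<and> j < J \<longrightarrow> \<not> (2*a - 2*j - 2 > g!(2*j))"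
  shows "ins_aux a j0 g = ins_aux a J g"
  using assms
proof (induction "J - j0" arbitrary: j0)
  case 0 then show ?case by simp
next
  case (Suc k)
  then have "j0 < J" by simp
  then have "ins_aux a j0 g = ins_aux a (j0+1) g"
    using Suc.prems by (subst ins_aux.simps) auto
  also have "\<dots> = ins_aux a J g"
    using Suc.hyps(1)[of "j0+1"] Suc.hyps(2) Suc.prems \<open>j0 < J\<close> by simp
  finally show ?case .
qed

lemma take_g: "n \<le> L \<Longrightarrow> take n (map h [1..<L+1] @ R) = map h [1..<n+1]"
  by (simp add: take_map take_upt del: upt_Suc)

lemma drop_g: "n \<le> L \<Longrightarrow> drop n (map h [1..<L+1] @ R) = map h [n+1..<L+1] @ R"
  by (simp add: drop_map del: upt_Suc)

lemma nth_g: "n < L \<Longrightarrow> (map h [1..<L+1] @ R) ! n = h (n+1)"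
  by (simp add: nth_append del: upt_Suc)

lemma ins_finish: "ins_aux a 0 (gam @ replicate (2*a+2) 0) = T @ replicate k 0 \<Longrightarrow> 0 \<notin> set T \<Longrightarrow> Ins a gam = T"
proof -
  assume e: "ins_aux a 0 (gam @ replicate (2*a+2) 0) = T @ replicate k 0" and z: "0 \<notin> set T"
  have "filter (\<lambda>x. x \<noteq> 0) (T @ replicate k 0) = T"
    using z by (simp add: filter_id_conv) (metis gr0I)
  then show ?thesis unfolding Ins_def e .
qed


lemma upt_split: "i \<le> j \<Longrightarrow> j \<le> k \<Longrightarrow> [i..<k] = [i..<j] @ [j..<k]"
  using upt_add_eq_append[of i j "k-j"] by simp

lemma step:
  fixes xs :: "nat list" and c :: nat
  assumes oc: "odd c" and cle: "\<forall>x\<in>set xs. c \<le> x"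
    and pos: "\<forall>i. 1 \<le> i \<and> i \<le> sylL xs \<longrightarrow> 0 < Xv xs i"
  shows "Ins ((c+1) div 2) (map (\<lambda>i. 2 * nat (Xv xs i)) [1..<sylL xs + 1]) =
         map (\<lambda>i. 2 * nat (Xv (xs@[c]) i)) [1..<sylL (xs@[c]) + 1]"
proof -
  define a where "a = (c+1) div 2"
  define l where "l = length xs"
  define L where "L = sylL xs"
  define h where "h = (\<lambda>i. 2 * nat (Xv xs i))"
  define h' where "h' = (\<lambda>i. 2 * nat (Xv (xs@[c]) i))"
  define g where "g = map h [1..<L+1] @ replicate (2*a+2) 0"
  have ca: "c = 2*a - 1" "a \<ge> 1" "int c = 2 * int a - 1" using oc by (auto simp: a_def elim!: oddE)
  have skipcond: "\<forall>j. 0 \<le> j \<and> j < J \<longrightarrow> \<not> (2*a-2*j-2 > g!(2*j))"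
    if J: "2*J \<le> L" "J \<le> l" "2*J \<le> c" for J
  proof (intro allI impI)
    fix j assume j: "0 \<le> j \<and> j < J"
    have "g!(2*j) = h (2*j+1)" unfolding g_def using J j by (intro nth_g) auto
    moreover have "Xv xs (2*j+1) \<ge> int a + int l - 2*int j - 1"
      using Xv_lower[OF cle, of j] J j by (simp add: a_def l_def)
    moreover have "j < a" using J j ca by linarith
    ultimately have "a - j \<le> nat (Xv xs (2*j+1))" using J j
      by (subst le_nat_iff) (auto simp: of_nat_diff)
    then show "\<not> (2*a-2*j-2 > g!(2*j))" using \<open>g!(2*j) = h (2*j+1)\<close> unfolding h_def by simp
  qed
  have Ins_eq: "Ins a (map h [1..<L+1]) = T" if "ins_aux a 0 g = T @ replicate k 0" "0 \<notin> set T" for T k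
    using ins_finish[of a "map h [1..<L+1]" T k] that unfolding g_def by simp
  show ?thesis
  proof (cases "2*l+1 \<le> c")
    case True
    have d1: "syl_d xs = l"
    proof (rule antisym)
      show "syl_d xs \<le> l" using syl_d_le l_def by simp
      show "l \<le> syl_d xs"
      proof (cases "l = 0")
        case False
        then have "1 \<le> l" by simp
        then have "c \<le> Defs.part xs l" using part_ge[OF cle, of l] l_def by simp
        then show ?thesis using True \<open>1 \<le> l\<close> by (intro syl_d_ge) (auto simp: l_def)
      qed simp
    qed
    have L2: "L = 2*l"
    proof (cases "l = 0")
      case False
      then have "1 \<le> l" by simp
      then have "c \<le> Defs.part xs l" using part_ge[OF cle, of l] l_def by simp
      then show ?thesis using True False unfolding L_def sylL_def d1 by simp
    qed (simp add: L_def sylL_def d1)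
    have d2: "syl_d (xs@[c]) = l+1"
    proof (rule antisym)
      show "syl_d (xs@[c]) \<le> l+1" using syl_d_le[of "xs@[c]"] l_def by simp
      show "l+1 \<le> syl_d (xs@[c])" using True by (intro syl_d_ge) (auto simp: l_def part_app)
    qed
    have L'2: "sylL (xs@[c]) = 2*l+2 - (if c = 2*l+1 then 1 else 0)"
      unfolding sylL_def d2 by (simp add: part_app l_def)
    have old: "h' i = h i + 2" if "1 \<le> i" "i \<le> 2*l" for i
    proof -
      have "Xv (xs@[c]) i = Xv xs i + 1" using Xv_app[OF oc that(1)] that True by (simp add: l_def)
      moreover have "0 < Xv xs i" using pos that L2 L_def by simp
      ultimately show ?thesis unfolding h_def h'_def by (simp add: nat_add_distrib)
    qed
    have new1: "Xv (xs@[c]) (2*l+1) = int a - int l"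
    proof -
      have "conj_part (xs@[c]) (2*l+1) = l+1"
        unfolding conj_app using conj_all[OF cle, of "2*l+1"] True by (simp add: l_def)
      moreover have "Defs.part (xs@[c]) (l+1) = c" by (simp add: part_app l_def)
      ultimately show ?thesis unfolding Xv_def using ca(3) by simp
    qed
    have map_old: "map h' [1..<2*l+1] = map (\<lambda>i. h i + 2) [1..<2*l+1]"
      by (rule map_cong) (auto simp: old)
    have sk: "ins_aux a 0 g = ins_aux a l g"
      using skipcond[of l] L2 True ca by (intro ins_aux_skip) auto
    show ?thesis
    proof (cases "c = 2*l+1")
      case True
      have al: "a = l+1" using True ca by simp
      have "ins_aux a 0 g = map (\<lambda>x. x+2) (take (2*l+1) g) @ drop (2*l+1) g"
        unfolding sk using al by (intro ins_aux_stop) simp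
      also have "\<dots> = map (\<lambda>i. h i + 2) [1..<2*l+1] @ [2] @ replicate (2*a+1) 0"
        unfolding g_def L2 by (simp del: upt_Suc)
      also have "\<dots> = map h' [1..<2*l+2] @ replicate (2*a+1) 0"
      proof -
        have "h' (2*l+1) = 2" unfolding h'_def new1 al by simp
        then show ?thesis using map_old by simp
      qed
      finally have e: "ins_aux a 0 g = map h' [1..<2*l+2] @ replicate (2*a+1) 0" .
      have nz: "0 \<notin> set (map h' [1..<2*l+2])"
      proof -
        have "h' (2*l+1) = 2" unfolding h'_def new1 al by simp
        then show ?thesis using old by (auto simp: less_Suc_eq)
      qed
      have "sylL (xs@[c]) + 1 = 2*l+2" using L'2 True by simp
      then show ?thesis using Ins_eq[OF e nz] unfolding h_def h'_def L_def a_def by (simp only:)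
    next
      case False
      then have c3: "2*l+3 \<le> c" using True oc by presburger
      have al: "a \<ge> l+2" using c3 ca by simp
      have new2: "Xv (xs@[c]) (2*l+2) = int a - int l - 1"
      proof -
        have "conj_part (xs@[c]) (Suc (Suc (Suc (2*l)))) = l+1"
          unfolding conj_app using conj_all[OF cle, of "Suc (Suc (Suc (2*l)))"] c3 by (simp add: l_def)
        moreover have "(int c - 1) div 2 = int a - 1" using ca by simp
        ultimately show ?thesis unfolding Xv_def by (simp add: part_app l_def)
      qed
      have g2l: "g ! (2*l) = 0" unfolding g_def L2 by (simp add: nth_append del: upt_Suc)
      have "ins_aux a 0 g = map (\<lambda>x. x+2) (take (2*l) g) @ [2 * a - 2 * l, 2 * a - 2 * l - 2] @ drop (2*l) g"
        unfolding sk using al g2l by (intro ins_aux_ins) auto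
      also have "\<dots> = map (\<lambda>i. h i + 2) [1..<2*l+1] @ [2 * a - 2 * l, 2 * a - 2 * l - 2] @ replicate (2*a+2) 0"
        unfolding g_def L2 by (simp del: upt_Suc)
      also have "\<dots> = map h' [1..<2*l+3] @ replicate (2*a+2) 0"
      proof -
        have "h' (2*l+1) = 2 * a - 2 * l" unfolding h'_def new1 using al by simp
        moreover have "h' (2*l+2) = 2 * a - 2 * l - 2" unfolding h'_def new2 using al by simp
        moreover have "[1..<2*l+3] = [1..<2*l+1] @ [2*l+1, 2*l+2]"
          using upt_split[of 1 "2*l+1" "2*l+3"] by (simp add: numeral_3_eq_3)
        ultimately show ?thesis using map_old by simp
      qed
      finally have e: "ins_aux a 0 g = map h' [1..<2*l+3] @ replicate (2*a+2) 0" .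
      have nz: "0 \<notin> set (map h' [1..<2*l+3])"
      proof
        assume "0 \<in> set (map h' [1..<2*l+3])"
        then obtain i where i: "1 \<le> i" "i < 2*l+3" "h' i = 0" by auto
        show False
        proof (cases "i \<le> 2*l")
          case True then show False using old[OF i(1) True] i by simp
        next
          case False
          then have "i = 2*l+1 \<or> i = 2*l+2" using i by auto
          then show False using i new1 new2 al unfolding h'_def by auto
        qed
      qed
      have "sylL (xs@[c]) + 1 = 2*l+3" using L'2 False by simp
      then show ?thesis using Ins_eq[OF e nz] unfolding h_def h'_def L_def a_def by (simp only:)
    qed
  next
    case False
    define d where "d = syl_d xs"
    have sets: "{j. 1 \<le> j \<and> j \<le> length (xs@[c]) \<and> 2 * j - 1 \<le> Defs.part (xs@[c]) j} =
        {j. 1 \<le> j \<and> j \<le> length xs \<and> 2 * j - 1 \<le> Defs.part xs j}"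
      using False by (auto simp: part_app l_def)
    have d'eq: "syl_d (xs@[c]) = d" unfolding d_def syl_d_def sets ..
    have dl: "d \<le> l" using syl_d_le d_def l_def by simp
    have ad: "a \<le> d" unfolding d_def using False ca part_ge[OF cle, of a]
      by (intro syl_d_ge) (auto simp: l_def)
    have L'eq: "sylL (xs@[c]) = L"
      unfolding sylL_def L_def d'eq d_def[symmetric] using dl by (simp add: part_app l_def)
    have cL: "c \<le> L"
    proof -
      have "2*d - 1 \<le> L" unfolding L_def sylL_def d_def[symmetric] by simp
      then show ?thesis using ad ca by linarith
    qed
    have L2l: "L \<le> 2*l" unfolding L_def sylL_def using dl d_def by simp
    have sk: "ins_aux a 0 g = ins_aux a (a-1) g"
      using skipcond[of "a-1"] cL ca ad dl by (intro ins_aux_skip) auto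
    have "ins_aux a 0 g = map (\<lambda>x. x+2) (take c g) @ drop c g"
    proof -
      have "2*(a-1)+1 = c" using ca by simp
      then show ?thesis unfolding sk using ins_aux_stop[of a "a-1" g] by simp
    qed
    also have "\<dots> = map (\<lambda>i. h i + 2) [1..<c+1] @ map h [c+1..<L+1] @ replicate (2*a+2) 0"
      unfolding g_def take_g[OF cL] drop_g[OF cL] map_map by (simp only: o_def)
    also have "\<dots> = map h' [1..<L+1] @ replicate (2*a+2) 0"
    proof -
      have "[1..<L+1] = [1..<c+1] @ [c+1..<L+1]" using cL by (intro upt_split) auto
      moreover have "map h' [1..<c+1] = map (\<lambda>i. h i + 2) [1..<c+1]"
      proof (rule map_cong)
        fix i assume "i \<in> set [1..<c+1]"
        then have i: "1 \<le> i" "i \<le> c" by auto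
        have "Xv (xs@[c]) i = Xv xs i + 1" using Xv_app[OF oc i(1)] i cL L2l by (simp add: l_def)
        moreover have "0 < Xv xs i" using pos i cL L_def by simp
        ultimately show "h' i = h i + 2" unfolding h_def h'_def by (simp add: nat_add_distrib)
      qed simp
      moreover have "map h' [c+1..<L+1] = map h [c+1..<L+1]"
      proof (rule map_cong)
        fix i assume "i \<in> set [c+1..<L+1]"
        then have i: "1 \<le> i" "c < i" "i \<le> L" by auto
        have "Xv (xs@[c]) i = Xv xs i" using Xv_app[OF oc i(1)] i L2l by (simp add: l_def)
        then show "h' i = h i" unfolding h_def h'_def by simp
      qed simp
      ultimately show ?thesis by simp
    qed
    finally have e: "ins_aux a 0 g = map h' [1..<L+1] @ replicate (2*a+2) 0" .
    have nz: "0 \<notin> set (map h' [1..<L+1])"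
    proof
      assume "0 \<in> set (map h' [1..<L+1])"
      then obtain i where i: "1 \<le> i" "i \<le> L" "h' i = 0" by auto
      have "Xv (xs@[c]) i = Xv xs i + (if i \<le> c then 1 else 0)" using Xv_app[OF oc i(1)] i L2l by (simp add: l_def)
      moreover have "0 < Xv xs i" using pos i L_def by simp
      ultimately show False using i(3) unfolding h'_def by (auto split: if_splits)
    qed
    show ?thesis using Ins_eq[OF e nz] unfolding L'eq h_def h'_def L_def a_def by (simp only:)
  qed
qed


lemma Ins_nz: "0 \<notin> set (Ins a gam)"
  unfolding Ins_def by simp

lemma sylL_nil: "sylL [] = 0"
proof -
  have "syl_d [] = 0" using syl_d_le[of "[]"] by simp
  then show ?thesis unfolding sylL_def by simp
qed

lemma main_fold:
  "sorted_wrt (\<ge>) lam \<Longrightarrow> \<forall>x\<in>set lam. odd x \<Longrightarrow>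
   foldl (\<lambda>gam x. Ins ((x+1) div 2) gam) [] lam = map (\<lambda>x. 2*x) (Syl lam)"
proof (induction lam rule: rev_induct)
  case Nil
  then show ?case unfolding Syl_alt sylL_nil by simp
next
  case (snoc c xs)
  let ?F = "\<lambda>gam x. Ins ((x+1) div 2) gam"
  have sx: "sorted_wrt (\<ge>) xs" and cle: "\<forall>x\<in>set xs. c \<le> x"
    using snoc.prems(1) by (auto simp: sorted_wrt_append)
  have oc: "odd c" using snoc.prems(2) by simp
  have IH: "foldl ?F [] xs = map (\<lambda>i. 2 * nat (Xv xs i)) [1..<sylL xs + 1]"
    using snoc.IH sx snoc.prems(2) unfolding Syl_alt by (simp add: o_def)
  have pos: "\<forall>i. 1 \<le> i \<and> i \<le> sylL xs \<longrightarrow> 0 < Xv xs i"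
  proof (cases xs rule: rev_cases)
    case Nil then show ?thesis by (simp add: sylL_nil)
  next
    case (snoc ys y)
    then have "0 \<notin> set (foldl ?F [] xs)" using Ins_nz by simp
    show ?thesis
    proof (intro allI impI)
      fix i assume i: "1 \<le> i \<and> i \<le> sylL xs"
      then have "i \<in> set [1..<sylL xs + 1]" by (simp del: upt_Suc)
      then have "2 * nat (Xv xs i) \<in> set (map (\<lambda>i. 2 * nat (Xv xs i)) [1..<sylL xs + 1])" unfolding set_map by (rule imageI)
      then have "2 * nat (Xv xs i) \<noteq> 0" using \<open>0 \<notin> set (foldl ?F [] xs)\<close> unfolding IH
        by metis
      then show "0 < Xv xs i" by simp
    qed
  qed
  have "foldl ?F [] (xs @ [c]) = Ins ((c+1) div 2) (foldl ?F [] xs)" by simp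
  also have "\<dots> = map (\<lambda>i. 2 * nat (Xv (xs@[c]) i)) [1..<sylL (xs@[c]) + 1]"
    unfolding IH by (rule step[OF oc cle pos])
  also have "\<dots> = map (\<lambda>x. 2*x) (Syl (xs @ [c]))"
    unfolding Syl_alt by (simp add: o_def)
  finally show ?case .
qed

lemma psquare_simps: "psquare [] = []" "psquare (x # xs) = x # x # psquare xs"
  by (simp_all add: psquare_def)

lemma set_psquare: "set (psquare lam) = set lam"
  by (induction lam) (auto simp: psquare_simps)

lemma sum_psquare: "sum_list (psquare lam) = 2 * sum_list lam"
  by (induction lam) (auto simp: psquare_simps)

lemma count_psquare: "count_list (psquare lam) i = 2 * count_list lam i"
  by (induction lam) (auto simp: psquare_simps)

lemma sorted_psquare: "sorted_wrt (\<ge>) lam \<Longrightarrow> sorted_wrt (\<ge>) (psquare lam)"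
  by (induction lam) (auto simp: psquare_simps set_psquare)

lemma count_concat_rep:
  "distinct zs \<Longrightarrow> count (mset (concat (map (\<lambda>i. replicate (k i) i) zs))) x = (if x \<in> set zs then k x else 0)"
  by (induction zs) auto

lemma Bress_nil: "Bress [] = []"
proof -
  have "bress_pairs [] = []" by (simp add: bress_pairs_def)
  then show ?thesis unfolding Bress_def by (subst while_unfold) simp
qed

lemma phi_beta_sq: "phi_beta (psquare lam) = []"
  unfolding phi_beta_def by (simp add: count_psquare filter_empty_conv)

lemma phi_alpha_sq:
  assumes "sorted_wrt (\<ge>) lam"
  shows "phi_alpha (psquare lam) = lam"
proof -
  let ?X = "concat (map (\<lambda>i. replicate (count_list (psquare lam) i div 2) i) (remdups (psquare lam)))"
  have "mset (rev lam) = mset ?X"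
  proof (rule multiset_eqI)
    fix x
    show "count (mset (rev lam)) x = count (mset ?X) x"
      by (subst count_concat_rep) (auto simp: count_psquare set_psquare count_mset count_list_0_iff)
  qed
  moreover have "sorted (rev lam)" using assms by (simp add: sorted_wrt_rev)
  ultimately have "sort ?X = rev lam" by (rule properties_for_sort)
  then show ?thesis unfolding phi_alpha_def by simp
qed

theorem mainTheorem3:
  fixes n :: nat and lam :: "nat list"
  assumes "1 \<le> n" and "lam \<in> OddParts n"
  shows "psquare lam \<in> OddParts (2 * n) \<and> Phi (psquare lam) = map (\<lambda>x. 2 * x) (Syl lam)"
proof -
  have s: "sorted_wrt (\<ge>) lam" and p: "\<forall>x\<in>set lam. 0 < x" and sm: "sum_list lam = n"
    and o: "\<forall>x\<in>set lam. odd x"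
    using assms(2) by (auto simp: OddParts_def partitions_def)
  have "psquare lam \<in> OddParts (2 * n)"
    using sorted_psquare[OF s] p sm o
    by (simp add: OddParts_def partitions_def set_psquare sum_psquare)
  moreover have "Phi (psquare lam) = map (\<lambda>x. 2 * x) (Syl lam)"
    unfolding Phi_def phi_beta_sq Bress_nil phi_alpha_sq[OF s] using main_fold[OF s o] by simp
  ultimately show ?thesis by simp
qed

end
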